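(* Assume $p$ is subcritical ($\mu<1$) and unbounded. Then $$\lim_{r\to\infty}\frac{\bar F(r)}{\bar H(r)}=\lim_{r\to\infty}\frac{p_r}{q_r}=1-\mu,$$ where the second limit is taken along the infinite set $\{r:p_r>0\}$ (on which $q_r>0$).
   Context: Let $p=(p_0,p_1,p_2,\dots)$ be a probability distribution on the nonnegative integers with mean $\mu=\sum_k kp_k\in(0,\infty)$, and let $\tau(p)$ be a Galton–Watson tree with offspring distribution $p$: it starts with a single root at generation $0$, and every vertex independently has $k$ children with probability $p_k$. The out-degree of a vertex is its number of children. $M$ denotes the global maximal out-degree, i.e. the supremum of the out-degrees of all vertices of $\tau(p)$. $\bar F(r)=\sum_{k>r}p_k$, $H(r)=\mathbf{P}[M\le r]$, $\bar H(r)=1-H(r)$, and $q_r=\mathbf{P}[M=r]$. The distribution $p$ is called unbounded if the set $\{r:p_r>0\}$ is unbounded. *)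

theory Defs
  imports "HOL-Probability.Probability"
begin

text \<open>Galton--Watson tree via the Ulam--Harris construction: an i.i.d. family of
  offspring numbers indexed by all words (nat list), each with law p.
  The vertices of the tree are the words u = [u_0,...,u_{n-1}] with
  u_j < omega (take j u) for all j < n; the out-degree of vertex u is omega u.\<close>

definition GW_space :: "nat pmf \<Rightarrow> (nat list \<Rightarrow> nat) measure" where
  "GW_space p = PiM UNIV (\<lambda>_. measure_pmf p)"

definition gw_vertex :: "(nat list \<Rightarrow> nat) \<Rightarrow> nat list \<Rightarrow> bool" where
  "gw_vertex \<omega> u \<longleftrightarrow> (\<forall>j < length u. u ! j < \<omega> (take j u))"

definition gw_maxdeg :: "(nat list \<Rightarrow> nat) \<Rightarrow> enat" where
  "gw_maxdeg \<omega> = (SUP u \<in> {u. gw_vertex \<omega> u}. enat (\<omega> u))"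

definition mean_pmf :: "nat pmf \<Rightarrow> real" where
  "mean_pmf p = (\<Sum>k. real k * pmf p k)"

definition Fbar :: "nat pmf \<Rightarrow> nat \<Rightarrow> real" where
  "Fbar p r = (\<Sum>k. if k > r then pmf p k else 0)"

definition H :: "nat pmf \<Rightarrow> nat \<Rightarrow> real" where
  "H p r = measure (GW_space p) {\<omega> \<in> space (GW_space p). gw_maxdeg \<omega> \<le> enat r}"

definition Hbar :: "nat pmf \<Rightarrow> nat \<Rightarrow> real" where
  "Hbar p r = 1 - H p r"

definition q :: "nat pmf \<Rightarrow> nat \<Rightarrow> real" where
  "q p r = measure (GW_space p) {\<omega> \<in> space (GW_space p). gw_maxdeg \<omega> = enat r}"

end

theory Submission
  imports Defs "HOL-Probability.Probability"
begin


lemma space_GW[simp]: "space (GW_space p) = UNIV"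
  by (simp add: GW_space_def space_PiM)

lemma prob_GW: "prob_space (GW_space p)"
  unfolding GW_space_def by (intro prob_space_PiM measure_pmf.prob_space_axioms)

lemma coord_meas[measurable]: "(\<lambda>\<omega>. \<omega> u) \<in> measurable (GW_space p) (count_space UNIV)"
  unfolding GW_space_def
proof -
  have "(\<lambda>\<omega>. \<omega> u) \<in> measurable (PiM UNIV (\<lambda>_. measure_pmf p)) (measure_pmf p)"
    by (rule measurable_component_singleton) auto
  then show "(\<lambda>\<omega>. \<omega> u) \<in> measurable (PiM UNIV (\<lambda>_. measure_pmf p)) (count_space UNIV)"
    by (simp add: measurable_cong_sets[OF refl sets_measure_pmf_count_space])
qed

lemma vertex_meas[measurable]: "Measurable.pred (GW_space p) (\<lambda>\<omega>. gw_vertex \<omega> u)"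
  unfolding gw_vertex_def by measurable




definition EE :: "nat \<Rightarrow> (nat list \<Rightarrow> nat) set" where
  "EE r = {\<omega>. \<forall>u. gw_vertex \<omega> u \<longrightarrow> \<omega> u \<le> r}"

definition gw_shift :: "nat \<Rightarrow> (nat list \<Rightarrow> nat) \<Rightarrow> (nat list \<Rightarrow> nat)" where
  "gw_shift i \<omega> = (\<lambda>s. \<omega> (i # s))"

lemma EE_sets[measurable]: "EE r \<in> sets (GW_space p)"
proof -
  have "Measurable.pred (GW_space p) (\<lambda>\<omega>. \<forall>u. gw_vertex \<omega> u \<longrightarrow> \<omega> u \<le> r)"
    by measurable
  then show ?thesis unfolding EE_def by (simp add: pred_def)
qed

lemma maxdeg_le: "gw_maxdeg \<omega> \<le> enat r \<longleftrightarrow> \<omega> \<in> EE r"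
  unfolding gw_maxdeg_def EE_def by (auto simp: SUP_le_iff)

lemma vertex_Nil[simp]: "gw_vertex \<omega> []"
  by (simp add: gw_vertex_def)

lemma vertex_Cons: "gw_vertex \<omega> (i # s) \<longleftrightarrow> i < \<omega> [] \<and> gw_vertex (gw_shift i \<omega>) s"
  unfolding gw_vertex_def gw_shift_def by (simp add: All_less_Suc2)

lemma EE_decomp: "\<omega> \<in> EE r \<longleftrightarrow> \<omega> [] \<le> r \<and> (\<forall>i < \<omega> []. gw_shift i \<omega> \<in> EE r)"
proof
  assume A: "\<omega> \<in> EE r"
  show "\<omega> [] \<le> r \<and> (\<forall>i < \<omega> []. gw_shift i \<omega> \<in> EE r)"
    using A unfolding EE_def by (auto simp: vertex_Cons) (metis gw_shift_def vertex_Cons)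
next
  assume A: "\<omega> [] \<le> r \<and> (\<forall>i < \<omega> []. gw_shift i \<omega> \<in> EE r)"
  show "\<omega> \<in> EE r"
    unfolding EE_def
  proof (intro CollectI allI impI)
    fix u assume "gw_vertex \<omega> u"
    then show "\<omega> u \<le> r"
      using A by (cases u) (auto simp: vertex_Cons EE_def gw_shift_def)
  qed
qed

lemma shift_distr: "distr (GW_space p) (GW_space p) (gw_shift i) = GW_space p"
proof -
  have "distr (PiM UNIV (\<lambda>_. measure_pmf p)) (PiM UNIV (\<lambda>_. measure_pmf p)) (\<lambda>\<omega>. \<lambda>n\<in>UNIV. \<omega> (i # n))
        = PiM UNIV (\<lambda>_. measure_pmf p)"
    using distr_PiM_reindex[of UNIV "\<lambda>_. measure_pmf p" "Cons i" UNIV]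
    by (simp add: measure_pmf.prob_space_axioms)
  then show ?thesis
    unfolding GW_space_def gw_shift_def by (simp add: restrict_UNIV)
qed

lemma shift_meas[measurable]: "gw_shift i \<in> measurable (GW_space p) (GW_space p)"
  unfolding GW_space_def gw_shift_def
  by (rule measurable_PiM_single') (auto intro: coord_meas[unfolded GW_space_def] simp: space_PiM)

lemma prob_shift: "measure (GW_space p) (gw_shift i -` A) = measure (GW_space p) A"
  if "A \<in> sets (GW_space p)"
proof -
  have "measure (distr (GW_space p) (GW_space p) (gw_shift i)) A = measure (GW_space p) (gw_shift i -` A \<inter> space (GW_space p))"
    by (rule measure_distr) (use that in auto)
  then show ?thesis by (simp add: shift_distr)
qed




lemma coord_meas'[measurable]: "(\<lambda>\<omega>. \<omega> u) \<in> measurable (GW_space p) (measure_pmf p)"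
  unfolding GW_space_def by (rule measurable_component_singleton) auto

lemma indep_coords: "prob_space.indep_vars (GW_space p) (\<lambda>_. measure_pmf p) (\<lambda>u \<omega>. \<omega> u) UNIV"
proof -
  interpret prob_space "GW_space p" by (rule prob_GW)
  have c: "distr (GW_space p) (measure_pmf p) (\<lambda>\<omega>. \<omega> i) = measure_pmf p" for i
    unfolding GW_space_def by (rule distr_PiM_component) (auto simp: measure_pmf.prob_space_axioms)
  show ?thesis
    by (subst indep_vars_iff_distr_eq_PiM) (auto simp: c restrict_UNIV GW_space_def[symmetric])
qed

lemma comp_single_pmf: "i \<in> I \<Longrightarrow> (\<lambda>\<omega>. \<omega> i) \<in> measurable (PiM I (\<lambda>_. measure_pmf p)) (count_space UNIV)"
proof -
  assume "i \<in> I"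
  then have "(\<lambda>\<omega>. \<omega> i) \<in> measurable (PiM I (\<lambda>_. measure_pmf p)) (measure_pmf p)"
    by (rule measurable_component_singleton)
  then show ?thesis
    by (simp add: measurable_cong_sets[OF refl sets_measure_pmf_count_space])
qed

definition KK :: "nat option \<Rightarrow> nat list set" where
  "KK j = (case j of None \<Rightarrow> {[]} | Some i \<Rightarrow> range (Cons i))"

lemma indep_blocks: "prob_space.indep_vars (GW_space p) (\<lambda>j. PiM (KK j) (\<lambda>_. measure_pmf p))
   (\<lambda>j \<omega>. restrict (\<lambda>i. \<omega> i) (KK j)) UNIV"
proof -
  interpret prob_space "GW_space p" by (rule prob_GW)
  show ?thesis
    by (rule indep_vars_restrict[OF indep_coords]) (auto simp: disjoint_family_on_def KK_def split: option.splits)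
qed

lemma F_prob: "measure (GW_space p) {\<omega>. \<omega> [] = k \<and> (\<forall>i<k. gw_shift i \<omega> \<in> EE r)}
   = pmf p k * measure (GW_space p) (EE r) ^ k"
proof -
  interpret prob_space "GW_space p" by (rule prob_GW)
  define X where "X = (\<lambda>j (\<omega>::nat list \<Rightarrow> nat). restrict (\<lambda>i. \<omega> i) (KK j))"
  define A where "A = (\<lambda>j. case j of None \<Rightarrow> {f \<in> space (PiM (KK None) (\<lambda>_. measure_pmf p)). f [] = k}
     | Some i \<Rightarrow> {f \<in> space (PiM (KK (Some i)) (\<lambda>_. measure_pmf p)). (\<lambda>s. f (i#s)) \<in> EE r})"
  define J where "J = insert None (Some ` {..<k})"
  have A_sets: "A j \<in> sets (PiM (KK j) (\<lambda>_. measure_pmf p))" for j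
  proof (cases j)
    case None
    have m: "(\<lambda>f. f []) \<in> measurable (PiM (KK None) (\<lambda>_. measure_pmf p)) (measure_pmf p)"
      by (rule measurable_component_singleton) (simp add: KK_def)
    have "A j = (\<lambda>f. f []) -` {k} \<inter> space (PiM (KK None) (\<lambda>_. measure_pmf p))"
      using None by (auto simp: A_def)
    then show ?thesis using None by (simp add: measurable_sets[OF m])
  next
    case (Some i)
    have m: "(\<lambda>f s. f (i#s)) \<in> measurable (PiM (KK (Some i)) (\<lambda>_. measure_pmf p)) (GW_space p)"
      unfolding GW_space_def
      by (rule measurable_PiM_single') (auto intro: comp_single_pmf simp: space_PiM KK_def)
    have "A j = (\<lambda>f s. f (i#s)) -` EE r \<inter> space (PiM (KK (Some i)) (\<lambda>_. measure_pmf p))"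
      using Some by (auto simp: A_def)
    then show ?thesis using Some by (simp add: measurable_sets[OF m])
  qed
  have pre_None: "X None -` A None = {\<omega>. \<omega> [] = k}"
    by (auto simp: X_def A_def KK_def space_PiM)
  have pre_Some: "X (Some i) -` A (Some i) = gw_shift i -` EE r" for i
    by (auto simp: X_def A_def KK_def space_PiM gw_shift_def)
  have "prob (\<Inter>j\<in>J. X j -` A j \<inter> space (GW_space p)) = (\<Prod>j\<in>J. prob (X j -` A j \<inter> space (GW_space p)))"
    by (rule indep_varsD[OF indep_blocks[of p, folded X_def]]) (auto simp: J_def A_sets)
  moreover have "(\<Inter>j\<in>J. X j -` A j \<inter> space (GW_space p)) = {\<omega>. \<omega> [] = k \<and> (\<forall>i<k. gw_shift i \<omega> \<in> EE r)}"
    unfolding J_def using pre_None pre_Some by auto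
  moreover have "(\<Prod>j\<in>J. prob (X j -` A j \<inter> space (GW_space p))) = prob {\<omega>. \<omega> [] = k} * (\<Prod>i<k. prob (gw_shift i -` EE r))"
    unfolding J_def by (simp add: prod.reindex pre_None pre_Some)
  moreover have "prob {\<omega>. \<omega> [] = k} = pmf p k"
  proof -
    have c: "distr (GW_space p) (measure_pmf p) (\<lambda>\<omega>. \<omega> []) = measure_pmf p"
      unfolding GW_space_def by (rule distr_PiM_component) (auto simp: measure_pmf.prob_space_axioms)
    have "measure (distr (GW_space p) (measure_pmf p) (\<lambda>\<omega>. \<omega> [])) {k} = prob ((\<lambda>\<omega>. \<omega> []) -` {k} \<inter> space (GW_space p))"
      by (rule measure_distr) auto
    then show ?thesis by (simp add: c measure_pmf_single vimage_def)
  qed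
  moreover have "prob (gw_shift i -` EE r) = prob (EE r)" for i
    by (rule prob_shift) simp
  ultimately show ?thesis by simp
qed

lemma H_fix: "measure (GW_space p) (EE r) = (\<Sum>k\<le>r. pmf p k * measure (GW_space p) (EE r) ^ k)"
proof -
  interpret prob_space "GW_space p" by (rule prob_GW)
  define F where "F = (\<lambda>k. {\<omega>. \<omega> [] = k \<and> (\<forall>i<k. gw_shift i \<omega> \<in> EE r)})"
  have F_sets: "F k \<in> sets (GW_space p)" for k
  proof -
    have "Measurable.pred (GW_space p) (\<lambda>\<omega>. \<omega> [] = k \<and> (\<forall>i<k. gw_shift i \<omega> \<in> EE r))"
      by measurable
    then show ?thesis unfolding F_def by (simp add: pred_def)
  qed
  have "EE r = (\<Union>k\<in>{..r}. F k)"
  proof (rule set_eqI)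
    fix \<omega> show "\<omega> \<in> EE r \<longleftrightarrow> \<omega> \<in> (\<Union>k\<in>{..r}. F k)"
      using EE_decomp[of \<omega> r] by (auto simp: F_def)
  qed
  then have "prob (EE r) = prob (\<Union>k\<in>{..r}. F k)" by (rule arg_cong)
  also have "\<dots> = (\<Sum>k\<in>{..r}. prob (F k))"
    by (rule measure_finite_Union) (auto simp: F_sets disjoint_family_on_def, auto simp: F_def)
  finally have "prob (EE r) = (\<Sum>k\<le>r. prob (F k))" by simp
  then show ?thesis by (simp add: F_def F_prob)
qed




lemma pmf_sums: "(\<lambda>k. pmf p k) sums 1"
proof -
  have "(\<lambda>k. measure (measure_pmf p) {k}) sums measure (measure_pmf p) (\<Union>k. {k})"
    by (rule measure_pmf.finite_measure_UNION) (auto simp: disjoint_family_on_def)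
  then show ?thesis by (simp add: measure_pmf_single)
qed

lemma Fbar_sums: "(\<lambda>k. if k > r then pmf p k else 0) sums (1 - (\<Sum>k\<le>r. pmf p k))"
proof -
  have "(\<lambda>k. pmf p k - (if k \<in> {..r} then pmf p k else 0)) sums (1 - (\<Sum>k\<in>{..r}. pmf p k))"
    by (intro sums_diff pmf_sums sums_If_finite_set) auto
  moreover have "(\<lambda>k. pmf p k - (if k \<in> {..r} then pmf p k else 0)) = (\<lambda>k. if k > r then pmf p k else 0)"
    by (auto simp: fun_eq_iff)
  ultimately show ?thesis by simp
qed

lemma Fbar_eq: "Fbar p r = 1 - (\<Sum>k\<le>r. pmf p k)"
  unfolding Fbar_def using Fbar_sums sums_unique by metis

lemma Fbar_lim: "Fbar p \<longlonglongrightarrow> 0"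
proof -
  have "(\<lambda>r. \<Sum>k\<le>r. pmf p k) \<longlonglongrightarrow> 1" using pmf_sums sums_def_le by blast
  then have "(\<lambda>r. 1 - (\<Sum>k\<le>r. pmf p k)) \<longlonglongrightarrow> 1 - 1" by (intro tendsto_intros)
  then show ?thesis by (simp add: Fbar_eq[abs_def])
qed

lemma Fbar_pos:
  assumes "infinite {r. pmf p r > 0}"
  shows "Fbar p r > 0"
proof -
  obtain k where k: "k > r" "pmf p k > 0"
    using assms by (metis infinite_nat_iff_unbounded mem_Collect_eq)
  have "pmf p k \<le> Fbar p r"
    unfolding Fbar_def
    using sum_le_suminf[OF sums_summable[OF Fbar_sums[of r p]], of "{k}"] k by auto
  then show ?thesis using k by simp
qed

lemma mean_sums: "summable (\<lambda>k. real k * pmf p k) \<Longrightarrow> (\<lambda>k. real k * pmf p k) sums mean_pmf p"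
  unfolding mean_pmf_def by (simp add: summable_sums)

lemma p0_pos:
  assumes summ: "summable (\<lambda>k. real k * pmf p k)" and "mean_pmf p < 1"
  shows "pmf p 0 > 0"
proof -
  have s1: "(\<lambda>k. pmf p k - (if k \<in> {0} then pmf p k else 0)) sums (1 - (\<Sum>k\<in>{0}. pmf p k))"
    by (intro sums_diff pmf_sums sums_If_finite_set) auto
  have "1 - pmf p 0 \<le> mean_pmf p"
  proof (rule sums_le[OF _ s1[simplified] mean_sums[OF summ]])
    fix k show "pmf p k - (if k = 0 then pmf p k else 0) \<le> real k * pmf p k"
      by (cases k) (auto simp: algebra_simps pmf_nonneg)
  qed
  then show ?thesis using assms by simp
qed

lemma tail_lim:
  assumes summ: "summable (\<lambda>k. real k * pmf p k)"
  shows "(\<lambda>r. real r * Fbar p r) \<longlonglongrightarrow> 0"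
proof -
  have s1: "(\<lambda>k. real r * (if k > r then pmf p k else 0)) sums (real r * Fbar p r)" for r
    using sums_mult[OF Fbar_sums[of r p]] by (simp add: Fbar_eq)
  have s2: "(\<lambda>k. real k * pmf p k - (if k \<in> {..r} then real k * pmf p k else 0))
     sums (mean_pmf p - (\<Sum>k\<in>{..r}. real k * pmf p k))" for r
    by (intro sums_diff mean_sums summ sums_If_finite_set) auto
  have up: "real r * Fbar p r \<le> mean_pmf p - (\<Sum>k\<le>r. real k * pmf p k)" for r
  proof (rule sums_le[OF _ s1 s2[simplified]])
    fix k show "real r * (if r < k then pmf p k else 0) \<le> real k * pmf p k - (if k \<le> r then real k * pmf p k else 0)"
      by (auto intro: mult_right_mono)
  qed
  have lo: "0 \<le> real r * Fbar p r" for r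
  proof -
    have "0 \<le> Fbar p r" unfolding Fbar_def
      by (rule suminf_nonneg[OF sums_summable[OF Fbar_sums]]) auto
    then show ?thesis by simp
  qed
  have "(\<lambda>r. \<Sum>k\<le>r. real k * pmf p k) \<longlonglongrightarrow> mean_pmf p"
    using mean_sums[OF summ] sums_def_le by blast
  then have "(\<lambda>r. mean_pmf p - (\<Sum>k\<le>r. real k * pmf p k)) \<longlonglongrightarrow> mean_pmf p - mean_pmf p"
    by (intro tendsto_intros)
  then have L: "(\<lambda>r. mean_pmf p - (\<Sum>k\<le>r. real k * pmf p k)) \<longlonglongrightarrow> 0" by simp
  show ?thesis
    by (rule tendsto_sandwich[of "\<lambda>_. 0" _ _ "\<lambda>r. mean_pmf p - (\<Sum>k\<le>r. real k * pmf p k)", OF _ _ tendsto_const L])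
      (auto simp: lo up)
qed




lemma tannery_like:
  fixes w x :: "nat \<Rightarrow> real" and a :: "nat \<Rightarrow> nat \<Rightarrow> real"
  assumes w0: "\<And>k. 0 \<le> w k" and sm: "(\<lambda>k. real k * w k) sums \<mu>"
    and xlim: "x \<longlonglongrightarrow> 1"
    and lo: "\<And>r k. real k * x r ^ (k - 1) \<le> a r k" and hi: "\<And>r k. a r k \<le> real k"
    and x0: "\<And>r. 0 \<le> x r"
  shows "(\<lambda>r. \<Sum>k\<le>r. w k * a r k) \<longlonglongrightarrow> \<mu>"
proof (rule order_tendstoI)
  fix y assume "y < \<mu>"
  have "(\<lambda>K. \<Sum>k\<le>K. real k * w k) \<longlonglongrightarrow> \<mu>" using sm sums_def_le by blast
  then obtain K where K: "y < (\<Sum>k\<le>K. real k * w k)"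
  proof -
    have "eventually (\<lambda>K. y < (\<Sum>k\<le>K. real k * w k)) sequentially"
      using order_tendstoD(1)[OF \<open>(\<lambda>K. \<Sum>k\<le>K. real k * w k) \<longlonglongrightarrow> \<mu>\<close> \<open>y < \<mu>\<close>] .
    then show ?thesis using that by (auto simp: eventually_sequentially)
  qed
  have "(\<lambda>r. \<Sum>k\<le>K. w k * (real k * x r ^ (k - 1))) \<longlonglongrightarrow> (\<Sum>k\<le>K. w k * (real k * 1 ^ (k - 1)))"
    by (intro tendsto_intros xlim)
  then have "(\<lambda>r. \<Sum>k\<le>K. w k * (real k * x r ^ (k - 1))) \<longlonglongrightarrow> (\<Sum>k\<le>K. real k * w k)"
    by (simp add: mult.commute)
  then have ev: "eventually (\<lambda>r. y < (\<Sum>k\<le>K. w k * (real k * x r ^ (k - 1)))) sequentially"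
    using K order_tendstoD(1) by blast
  show "eventually (\<lambda>r. y < (\<Sum>k\<le>r. w k * a r k)) sequentially"
    using ev eventually_ge_at_top[of K]
  proof eventually_elim
    case (elim r)
    have a0: "0 \<le> a r k" for k
      proof -
      have "0 \<le> real k * x r ^ (k - 1)" using x0[of r] by simp
      then show ?thesis using lo[of k r] by linarith
    qed
    have "(\<Sum>k\<le>K. w k * (real k * x r ^ (k - 1))) \<le> (\<Sum>k\<le>K. w k * a r k)"
      by (intro sum_mono mult_left_mono lo w0)
    also have "\<dots> \<le> (\<Sum>k\<le>r. w k * a r k)"
      using elim by (intro sum_mono2) (auto intro: mult_nonneg_nonneg w0 a0)
    finally show ?case using elim by simp
  qed
next
  fix y assume "\<mu> < y"
  have "(\<Sum>k\<le>r. w k * a r k) \<le> \<mu>" for r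
  proof -
    have "(\<Sum>k\<le>r. w k * a r k) \<le> (\<Sum>k\<le>r. real k * w k)"
      by (intro sum_mono) (metis hi w0 mult.commute mult_left_mono)
    also have "\<dots> \<le> \<mu>"
      using sum_le_suminf[OF sums_summable[OF sm], of "{..r}"] sums_unique[OF sm] w0 by auto
    finally show ?thesis .
  qed
  then show "eventually (\<lambda>r. (\<Sum>k\<le>r. w k * a r k) < y) sequentially"
    using \<open>\<mu> < y\<close> by (intro always_eventually) (auto intro: le_less_trans)
qed




lemma analysis_main:
  fixes p :: "nat pmf" and h qq :: "nat \<Rightarrow> real"
  assumes summ: "summable (\<lambda>k. real k * pmf p k)"
    and subcrit: "mean_pmf p < 1"
    and unbounded: "infinite {r. pmf p r > 0}"
    and h0: "\<And>r. 0 \<le> h r" and h1: "\<And>r. h r \<le> 1"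
    and hfix: "\<And>r. h r = (\<Sum>k\<le>r. pmf p k * h r ^ k)"
    and hmono: "\<And>r. h r \<le> h (Suc r)"
    and qS: "\<And>r. qq (Suc r) = h (Suc r) - h r" and q0: "qq 0 = h 0"
  shows "((\<lambda>r. Fbar p r / (1 - h r)) \<longlonglongrightarrow> 1 - mean_pmf p) \<and>
         (\<forall>r. pmf p r > 0 \<longrightarrow> qq r > 0) \<and>
         ((\<lambda>r. pmf p r / qq r) \<longlongrightarrow> 1 - mean_pmf p) (inf at_top (principal {r. pmf p r > 0}))"
proof -
  define \<mu> where "\<mu> = mean_pmf p"
  have msums: "(\<lambda>k. real k * pmf p k) sums \<mu>" unfolding \<mu>_def by (rule mean_sums[OF summ])
  have p0: "pmf p 0 > 0" by (rule p0_pos[OF summ subcrit])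
  have mu1: "\<mu> < 1" using subcrit by (simp add: \<mu>_def)
  have partial_le: "(\<Sum>k\<le>r. real k * pmf p k) \<le> \<mu>" for r
    using sum_le_suminf[OF sums_summable[OF msums], of "{..r}"] sums_unique[OF msums] by auto
  have hge: "pmf p 0 \<le> h r" for r
  proof -
    have "(\<Sum>k\<in>{0}. pmf p k * h r ^ k) \<le> (\<Sum>k\<le>r. pmf p k * h r ^ k)"
      by (intro sum_mono2) (auto intro!: mult_nonneg_nonneg zero_le_power h0)
    then show ?thesis using hfix[of r] by simp
  qed
  define g where "g r k = (\<Sum>j<k. h r ^ j)" for r k
  define G where "G r = (\<Sum>k\<le>r. pmf p k * g r k)" for r
  have g_hi: "g r k \<le> real k" for r k
  proof -
    have "g r k \<le> real (card {..<k}) * 1"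
      unfolding g_def by (rule sum_bounded_above) (auto intro: power_le_one h0 h1)
    then show ?thesis by simp
  qed
  have g_lo: "real k * h r ^ (k - 1) \<le> g r k" for r k
  proof -
    have "real (card {..<k}) * h r ^ (k - 1) \<le> g r k"
      unfolding g_def by (rule sum_bounded_below) (auto intro: power_decreasing h0 h1)
    then show ?thesis by simp
  qed
  have keyA: "1 - h r = Fbar p r + (1 - h r) * G r" for r
  proof -
    have "(\<Sum>k\<le>r. pmf p k * (1 - h r ^ k)) = (\<Sum>k\<le>r. (1 - h r) * (pmf p k * g r k))"
      by (intro sum.cong refl) (simp add: g_def one_diff_power_eq mult_ac)
    also have "\<dots> = (1 - h r) * G r" by (simp add: G_def sum_distrib_left)
    finally have e1: "(\<Sum>k\<le>r. pmf p k * (1 - h r ^ k)) = (1 - h r) * G r" .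
    have "(\<Sum>k\<le>r. pmf p k * (1 - h r ^ k)) = (\<Sum>k\<le>r. pmf p k) - (\<Sum>k\<le>r. pmf p k * h r ^ k)"
      by (simp add: right_diff_distrib sum_subtractf)
    then show ?thesis using e1 hfix[of r] Fbar_eq[of p r] by linarith
  qed
  have G_le: "G r \<le> \<mu>" for r
  proof -
    have "G r \<le> (\<Sum>k\<le>r. real k * pmf p k)"
      unfolding G_def by (intro sum_mono) (metis g_hi pmf_nonneg mult.commute mult_left_mono)
    then show ?thesis using partial_le[of r] by linarith
  qed
  have Fpos: "Fbar p r > 0" for r by (rule Fbar_pos[OF unbounded])
  have prodA: "(1 - h r) * (1 - G r) = Fbar p r" for r using keyA[of r] by (simp add: algebra_simps)
  have G_lt: "1 - G r \<ge> 1 - \<mu>" for r using G_le[of r] by linarith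
  have D_pos: "1 - h r > 0" for r
  proof -
    have "1 - h r \<ge> 0" using h1[of r] by simp
    moreover have "1 - h r \<noteq> 0" using prodA[of r] Fpos[of r] by (metis mult_zero_left less_irrefl)
    ultimately show ?thesis by linarith
  qed
  have ratio1: "Fbar p r / (1 - h r) = 1 - G r" for r
    using prodA[of r] D_pos[of r] by (simp add: field_simps)
  have D_le: "1 - h r \<le> Fbar p r / (1 - \<mu>)" for r
  proof -
    have "(1 - h r) * (1 - \<mu>) \<le> (1 - h r) * (1 - G r)"
      using D_pos[of r] G_lt[of r] by (intro mult_left_mono) auto
    then show ?thesis using prodA[of r] mu1 by (simp add: field_simps)
  qed
  have hlim: "h \<longlonglongrightarrow> 1"
  proof -
    have L: "(\<lambda>r. Fbar p r / (1 - \<mu>)) \<longlonglongrightarrow> 0 / (1 - \<mu>)"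
      by (intro tendsto_intros Fbar_lim) (use mu1 in simp)
    have "(\<lambda>r. 1 - h r) \<longlonglongrightarrow> 0"
      by (rule tendsto_sandwich[of "\<lambda>_. 0" _ _ "\<lambda>r. Fbar p r / (1 - \<mu>)", OF _ _ tendsto_const])
         (use L D_pos D_le h1 in \<open>auto intro: less_imp_le always_eventually\<close>)
    then have "(\<lambda>r. 1 - (1 - h r)) \<longlonglongrightarrow> 1 - 0" by (intro tendsto_intros)
    then show ?thesis by simp
  qed
  have Glim: "G \<longlonglongrightarrow> \<mu>"
    unfolding G_def[abs_def]
    by (rule tannery_like[OF pmf_nonneg msums hlim g_lo g_hi h0])
  have part1: "(\<lambda>r. Fbar p r / (1 - h r)) \<longlonglongrightarrow> 1 - \<mu>"
    unfolding ratio1 by (intro tendsto_intros Glim)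
  define c where "c m k = (\<Sum>i<k. h m ^ (k - Suc i) * h (Suc m) ^ i)" for m k
  define C where "C m = (\<Sum>k\<le>m. pmf p k * c m k)" for m
  have c_hi: "c m k \<le> real k" for m k
  proof -
    have "c m k \<le> real (card {..<k}) * 1"
      unfolding c_def by (rule sum_bounded_above) (auto intro!: mult_le_one power_le_one zero_le_power h0 h1)
    then show ?thesis by simp
  qed
  have c_lo: "real k * h m ^ (k - 1) \<le> c m k" for m k
  proof -
    have "real (card {..<k}) * h m ^ (k - 1) \<le> c m k"
      unfolding c_def
    proof (rule sum_bounded_below)
      fix i assume i: "i \<in> {..<k}"
      have "h m ^ (k - 1) = h m ^ (k - Suc i) * h m ^ i"
        using i by (simp add: power_add[symmetric])
      also have "\<dots> \<le> h m ^ (k - Suc i) * h (Suc m) ^ i"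
        by (intro mult_left_mono power_mono hmono h0) (simp add: h0)
      finally show "h m ^ (k - 1) \<le> h m ^ (k - Suc i) * h (Suc m) ^ i" .
    qed
    then show ?thesis by simp
  qed
  have keyB: "h (Suc m) - h m = pmf p (Suc m) * h (Suc m) ^ Suc m + (h (Suc m) - h m) * C m" for m
  proof -
    have "(\<Sum>k\<le>m. pmf p k * (h (Suc m) ^ k - h m ^ k)) = (\<Sum>k\<le>m. (h (Suc m) - h m) * (pmf p k * c m k))"
      by (intro sum.cong refl) (simp add: c_def power_diff_sumr2[of "h (Suc m)" _ "h m"] mult_ac)
    also have "\<dots> = (h (Suc m) - h m) * C m" by (simp add: C_def sum_distrib_left)
    finally have e1: "(\<Sum>k\<le>m. pmf p k * (h (Suc m) ^ k - h m ^ k)) = (h (Suc m) - h m) * C m" .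
    have e2: "(\<Sum>k\<le>m. pmf p k * (h (Suc m) ^ k - h m ^ k)) = (\<Sum>k\<le>m. pmf p k * h (Suc m) ^ k) - (\<Sum>k\<le>m. pmf p k * h m ^ k)"
      by (simp add: right_diff_distrib sum_subtractf)
    have e3: "h (Suc m) = (\<Sum>k\<le>m. pmf p k * h (Suc m) ^ k) + pmf p (Suc m) * h (Suc m) ^ Suc m"
      using hfix[of "Suc m"] by simp
    show ?thesis using e1 e2 e3 hfix[of m] by linarith
  qed
  have C_le: "C m \<le> \<mu>" for m
  proof -
    have "C m \<le> (\<Sum>k\<le>m. real k * pmf p k)"
      unfolding C_def by (intro sum_mono) (metis c_hi pmf_nonneg mult.commute mult_left_mono)
    then show ?thesis using partial_le[of m] by linarith
  qed
  have qform: "qq (Suc m) = pmf p (Suc m) * h (Suc m) ^ Suc m / (1 - C m)" for m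
  proof -
    have "1 - C m > 0" using C_le[of m] mu1 by linarith
    moreover have "(h (Suc m) - h m) * (1 - C m) = pmf p (Suc m) * h (Suc m) ^ Suc m"
    proof -
      have "(h (Suc m) - h m) * (1 - C m) = (h (Suc m) - h m) - (h (Suc m) - h m) * C m"
        by (simp add: right_diff_distrib)
      then show ?thesis using keyB[of m] by linarith
    qed
    ultimately show ?thesis using qS[of m] by (simp add: eq_divide_eq)
  qed
  have hpos: "h r > 0" for r using hge[of r] p0 by linarith
  have qpos: "\<forall>r. pmf p r > 0 \<longrightarrow> qq r > 0"
  proof (intro allI impI)
    fix r assume r: "pmf p r > 0"
    show "qq r > 0"
    proof (cases r)
      case 0 then show ?thesis using q0 hpos by simp
    next
      case (Suc m)
      have "1 - C m > 0" using C_le[of m] mu1 by linarith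
      then show ?thesis using r Suc by (simp add: qform hpos)
    qed
  qed
  have Clim: "C \<longlonglongrightarrow> \<mu>"
    unfolding C_def[abs_def]
    by (rule tannery_like[OF pmf_nonneg msums hlim c_lo c_hi h0])
  have powlim: "(\<lambda>r. h r ^ r) \<longlonglongrightarrow> 1"
  proof -
    have L: "(\<lambda>r. 1 - real r * Fbar p r / (1 - \<mu>)) \<longlonglongrightarrow> 1 - 0 / (1 - \<mu>)"
      by (intro tendsto_intros tail_lim[OF summ]) (use mu1 in simp)
    have lo: "1 - real r * Fbar p r / (1 - \<mu>) \<le> h r ^ r" for r
    proof -
      have "1 + real r * (h r - 1) \<le> (1 + (h r - 1)) ^ r"
        by (rule Bernoulli_inequality) (use h0[of r] in simp)
      moreover have "real r * (1 - h r) \<le> real r * (Fbar p r / (1 - \<mu>))"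
        by (intro mult_left_mono D_le) simp
      ultimately show ?thesis by (simp add: algebra_simps)
    qed
    show ?thesis
      by (rule tendsto_sandwich[OF _ _ L[simplified] tendsto_const])
         (auto intro!: always_eventually lo power_le_one h0 h1)
  qed
  define f where "f r = (1 - C (r - 1)) / h r ^ r" for r
  have flim: "f \<longlonglongrightarrow> (1 - \<mu>) / 1"
  proof -
    have "(\<lambda>r. C (r - 1)) \<longlonglongrightarrow> \<mu>"
      by (rule filterlim_compose[OF Clim filterlim_minus_const_nat_at_top])
    then show ?thesis
      unfolding f_def[abs_def] by (intro tendsto_divide tendsto_diff tendsto_const powlim) auto
  qed
  have part2: "((\<lambda>r. pmf p r / qq r) \<longlongrightarrow> 1 - \<mu>) (inf at_top (principal {r. pmf p r > 0}))"
  proof -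
    have "(f \<longlongrightarrow> 1 - \<mu>) (inf at_top (principal {r. pmf p r > 0}))"
      using tendsto_mono[OF inf_le1 flim] by simp
    moreover have "eventually (\<lambda>r. f r = pmf p r / qq r) (inf at_top (principal {r. pmf p r > 0}))"
      unfolding eventually_inf_principal
      using eventually_ge_at_top[of 1]
    proof eventually_elim
      case (elim r)
      show ?case
      proof
        assume r: "r \<in> {r. pmf p r > 0}"
        obtain m where m: "r = Suc m" using elim by (cases r) auto
        have "1 - C m > 0" using C_le[of m] mu1 by linarith
        then show "f r = pmf p r / qq r"
          using r m hpos[of "Suc m"] by (simp add: f_def qform field_simps)
      qed
    qed
    ultimately show ?thesis by (rule tendsto_cong[THEN iffD1, rotated])
  qed
  show ?thesis using part1 qpos part2 by (simp add: \<mu>_def)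
qed




lemma glue:
  fixes p :: "nat pmf"
  shows "H p r = measure (GW_space p) (EE r)"
    and "q p (Suc r) = H p (Suc r) - H p r"
    and "q p 0 = H p 0"
proof -
  have s: "{\<omega> \<in> space (GW_space p). gw_maxdeg \<omega> \<le> enat r} = EE r" for r
    using maxdeg_le by auto
  show H: "H p r = measure (GW_space p) (EE r)" for r unfolding H_def s ..
  interpret prob_space "GW_space p" by (rule prob_GW)
  have sub: "EE r \<subseteq> EE (Suc r)" unfolding EE_def by auto
  have "{\<omega> \<in> space (GW_space p). gw_maxdeg \<omega> = enat (Suc r)} = EE (Suc r) - EE r"
  proof (rule set_eqI)
    fix \<omega>
    show "\<omega> \<in> {\<omega> \<in> space (GW_space p). gw_maxdeg \<omega> = enat (Suc r)} \<longleftrightarrow> \<omega> \<in> EE (Suc r) - EE r"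
      unfolding Diff_iff maxdeg_le[symmetric] by (cases "gw_maxdeg \<omega>") auto
  qed
  then have "q p (Suc r) = prob (EE (Suc r) - EE r)" unfolding q_def by simp
  also have "\<dots> = prob (EE (Suc r)) - prob (EE r)"
    by (rule finite_measure_Diff) (use sub in auto)
  finally show "q p (Suc r) = H p (Suc r) - H p r" by (simp add: H)
  have "{\<omega> \<in> space (GW_space p). gw_maxdeg \<omega> = enat 0} = EE 0"
  proof (rule set_eqI)
    fix \<omega>
    show "\<omega> \<in> {\<omega> \<in> space (GW_space p). gw_maxdeg \<omega> = enat 0} \<longleftrightarrow> \<omega> \<in> EE 0"
      unfolding maxdeg_le[symmetric] by (cases "gw_maxdeg \<omega>") (auto simp: zero_enat_def[symmetric])
  qed
  then show "q p 0 = H p 0" unfolding q_def by (simp add: H)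
qed

theorem proposition2p6:
  fixes p :: "nat pmf"
  assumes summ: "summable (\<lambda>k. real k * pmf p k)"
    and pos: "0 < mean_pmf p"
    and subcrit: "mean_pmf p < 1"
    and unbounded: "infinite {r. pmf p r > 0}"
  shows "((\<lambda>r. Fbar p r / Hbar p r) \<longlongrightarrow> 1 - mean_pmf p) at_top \<and>
         (\<forall>r. pmf p r > 0 \<longrightarrow> q p r > 0) \<and>
         ((\<lambda>r. pmf p r / q p r) \<longlongrightarrow> 1 - mean_pmf p)
           (inf at_top (principal {r. pmf p r > 0}))"
proof -
  interpret prob_space "GW_space p" by (rule prob_GW)
  have "((\<lambda>r. Fbar p r / (1 - H p r)) \<longlonglongrightarrow> 1 - mean_pmf p) \<and>
         (\<forall>r. pmf p r > 0 \<longrightarrow> q p r > 0) \<and>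
         ((\<lambda>r. pmf p r / q p r) \<longlongrightarrow> 1 - mean_pmf p) (inf at_top (principal {r. pmf p r > 0}))"
  proof (rule analysis_main[OF summ subcrit unbounded])
    show "0 \<le> H p r" for r by (simp add: glue(1))
    show "H p r \<le> 1" for r by (simp add: glue(1))
    show "H p r = (\<Sum>k\<le>r. pmf p k * H p r ^ k)" for r by (simp add: glue(1) H_fix[symmetric])
    show "H p r \<le> H p (Suc r)" for r
    proof -
      have sub: "EE r \<subseteq> EE (Suc r)" unfolding EE_def by auto
      show ?thesis unfolding glue(1) by (rule finite_measure_mono[OF sub EE_sets])
    qed
    show "q p (Suc r) = H p (Suc r) - H p r" for r by (rule glue(2))
    show "q p 0 = H p 0" by (rule glue(3))
  qed
  then show ?thesis by (simp add: Hbar_def)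
qed


end
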